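(* Let $n=2e$ be even and consider a collection of disjoint decorated circularly ordered subsets of $\mathbb{Z}_n$ covering $\mathbb{Z}_n$ (each element of $\mathbb{Z}_n$ occurring in exactly one subset, with a decoration $+$ or $-$). This collection is a vertex set (i.e., it is the set of vertices induced by a signed planar diagram of the $n$-gon all of whose vertices have degree at least $3$) if and only if the following conditions hold: (1) each subset has at least three corners; (2) for no $i\in\mathbb{Z}_n$ is $i_+(i+1)_+\cdots$ a subset; (3) if $i_+j_+\cdots$ is a subset then $(j-1)_+(i+1)_+\cdots$ is a subset, and if $i_+j_-\cdots$ is a subset then $(i+1)_-(j+1)_+\cdots$ is a subset.
   Context: The corners of an $n$-gon are labelled by $i\in\mathbb{Z}_n$ in circular order, and $\bar i$ denotes the edge from corner $i$ to corner $i+1$. A (signed) planar diagram is a partition of the $n$ edges into $n/2$ unordered pairs, each pair carrying a sign: $\{\bar i,\bar j\}_+$ (opposing pair, glued orientation-compatibly) or $\{\bar i,\bar j\}_-$ (twisted pair); glueing gives a single-tile tiling of a closed surface. A decorated corner is a symbol $i_\pm$ with $i\in\mathbb{Z}_n$. A decorated circularly ordered subset is a cyclic sequence of decorated corners with distinct underlying corners, considered up to rotation (keeping decorations) and up to reversing the cyclic order while simultaneously changing every decoration $\pm$ to $\mp$. We say "$a_\alpha b_\beta\cdots$ is a subset" if some subset has a representative in which $a_\alpha$ is immediately followed (cyclically) by $b_\beta$. A planar diagram $D$ induces vertices by the successor rules: $i_+$ is followed by $(j+1)_+$ if $\{\bar i,\bar j\}_+\in D$, and by $j_-$ if $\{\bar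 i,\bar j\}_-\in D$; $i_-$ is followed by $(j+1)_+$ if $\{\overline{i-1},\bar j\}_-\in D$, and by $j_-$ if $\{\overline{i-1},\bar j\}_+\in D$. Starting from any decorated corner and following these rules until returning yields a vertex (a decorated circularly ordered subset); the degree of a vertex is its number of corners. A vertex set is the collection of vertices induced in this way by a planar diagram all of whose vertices have degree at least $3$. *)

theory Defs
  imports Main
begin

text \<open>Corners and edges of the n-gon are represented by naturals in {0..<n}; arithmetic is
  taken mod n. Edge i (written bar i in the paper) goes from corner i to corner i+1.
  A decorated corner is a pair (i, d) with d = True meaning i_+ and d = False meaning i_-.\<close>

type_synonym dcorner = "nat \<times> bool"

text \<open>A signed planar diagram: p is the fixed-point-free involution pairing the edges,
  s gives the sign of the pair (True = opposing pair {.,.}_+, False = twisted pair {.,.}_-).\<close>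

definition signed_diagram :: "nat \<Rightarrow> (nat \<Rightarrow> nat) \<Rightarrow> (nat \<Rightarrow> bool) \<Rightarrow> bool" where
  "signed_diagram n p s \<longleftrightarrow>
     (\<forall>i<n. p i < n \<and> p i \<noteq> i \<and> p (p i) = i \<and> s (p i) = s i)"

definition succ_corner :: "nat \<Rightarrow> (nat \<Rightarrow> nat) \<Rightarrow> (nat \<Rightarrow> bool) \<Rightarrow> dcorner \<Rightarrow> dcorner" where
  "succ_corner n p s x =
     (let i = fst x in
      if snd x then
        (if s i then ((p i + 1) mod n, True) else (p i, False))
      else
        (let k = (i + n - 1) mod n in
         if s k then (p k, False) else ((p k + 1) mod n, True)))"

definition orbit_period :: "nat \<Rightarrow> (nat \<Rightarrow> nat) \<Rightarrow> (nat \<Rightarrow> bool) \<Rightarrow> dcorner \<Rightarrow> nat" where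
  "orbit_period n p s x = (LEAST m. 0 < m \<and> (succ_corner n p s ^^ m) x = x)"

definition orbit_list :: "nat \<Rightarrow> (nat \<Rightarrow> nat) \<Rightarrow> (nat \<Rightarrow> bool) \<Rightarrow> dcorner \<Rightarrow> dcorner list" where
  "orbit_list n p s x = map (\<lambda>k. (succ_corner n p s ^^ k) x) [0..<orbit_period n p s x]"

text \<open>Decorated circularly ordered subsets: cyclic sequences (lists) up to rotation and up to
  reversal together with flipping all decorations.\<close>

definition dflip :: "dcorner \<Rightarrow> dcorner" where
  "dflip x = (fst x, \<not> snd x)"

definition dc_class :: "dcorner list \<Rightarrow> dcorner list set" where
  "dc_class xs = {ys. \<exists>k. ys = rotate k xs \<or> ys = rotate k (map dflip (rev xs))}"

definition dc_corners :: "dcorner list set \<Rightarrow> nat set" where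
  "dc_corners c = (\<Union>xs\<in>c. fst ` set xs)"

definition dc_collection :: "nat \<Rightarrow> dcorner list set set \<Rightarrow> bool" where
  "dc_collection n C \<longleftrightarrow>
     (\<forall>c\<in>C. \<exists>xs. c = dc_class xs \<and> distinct (map fst xs) \<and> fst ` set xs \<subseteq> {0..<n}) \<and>
     (\<forall>i<n. \<exists>!c. c \<in> C \<and> i \<in> dc_corners c)"

text \<open>"a b ... is a subset": some subset has a representative in which a is immediately
  followed (cyclically) by b.\<close>

definition dc_follows :: "dcorner list set set \<Rightarrow> dcorner \<Rightarrow> dcorner \<Rightarrow> bool" where
  "dc_follows C a b \<longleftrightarrow>
     (\<exists>c\<in>C. \<exists>xs\<in>c. \<exists>k<length xs. xs ! k = a \<and> xs ! (Suc k mod length xs) = b)"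

definition diagram_vertices :: "nat \<Rightarrow> (nat \<Rightarrow> nat) \<Rightarrow> (nat \<Rightarrow> bool) \<Rightarrow> dcorner list set set" where
  "diagram_vertices n p s = {dc_class (orbit_list n p s x) | x. fst x < n}"

definition is_vertex_set :: "nat \<Rightarrow> dcorner list set set \<Rightarrow> bool" where
  "is_vertex_set n C \<longleftrightarrow>
     (\<exists>p s. signed_diagram n p s \<and>
        (\<forall>x. fst x < n \<longrightarrow> 3 \<le> length (orbit_list n p s x)) \<and>
        C = diagram_vertices n p s)"

end

theory Submission
  imports Defs
begin

definition cnext :: "dcorner list \<Rightarrow> dcorner \<Rightarrow> dcorner \<Rightarrow> bool" where
  "cnext xs a b \<longleftrightarrow> (\<exists>k<length xs. xs ! k = a \<and> xs ! (Suc k mod length xs) = b)"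

definition revflip :: "dcorner list \<Rightarrow> dcorner list" where
  "revflip xs = map dflip (rev xs)"

lemma dflip_dflip[simp]: "dflip (dflip x) = x" by (simp add: dflip_def)
lemma dflip_neq[simp]: "dflip x \<noteq> x" by (cases x) (simp add: dflip_def)
lemma fst_dflip[simp]: "fst (dflip x) = fst x" by (simp add: dflip_def)

lemma revflip_revflip[simp]: "revflip (revflip xs) = xs"
  by (simp add: revflip_def rev_map comp_def)
lemma length_revflip[simp]: "length (revflip xs) = length xs"
  by (simp add: revflip_def)
lemma fst_set_revflip[simp]: "fst ` set (revflip xs) = fst ` set xs"
  by (force simp add: revflip_def)
lemma map_fst_revflip: "map fst (revflip xs) = rev (map fst xs)"
  by (simp add: revflip_def rev_map comp_def)
lemma distinct_revflip[simp]: "distinct (map fst (revflip xs)) = distinct (map fst xs)"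
  by (simp add: map_fst_revflip)
lemma nth_revflip: "k < length xs \<Longrightarrow> revflip xs ! k = dflip (xs ! (length xs - Suc k))"
  by (simp add: revflip_def rev_nth)

lemma cnext_alt: "cnext xs a b \<longleftrightarrow> xs \<noteq> [] \<and> (\<exists>k. xs ! (k mod length xs) = a \<and> xs ! (Suc k mod length xs) = b)"
proof
  assume "cnext xs a b"
  then obtain k where "k < length xs" "xs ! k = a" "xs ! (Suc k mod length xs) = b"
    unfolding cnext_def by blast
  then show "xs \<noteq> [] \<and> (\<exists>k. xs ! (k mod length xs) = a \<and> xs ! (Suc k mod length xs) = b)"
    by (intro conjI exI[of _ k]) auto
next
  assume "xs \<noteq> [] \<and> (\<exists>k. xs ! (k mod length xs) = a \<and> xs ! (Suc k mod length xs) = b)"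
  then obtain k where "xs \<noteq> []" "xs ! (k mod length xs) = a" "xs ! (Suc k mod length xs) = b"
    by blast
  then show "cnext xs a b" unfolding cnext_def
    by (intro exI[of _ "k mod length xs"]) (simp add: mod_Suc_eq)
qed

lemma cnext_rotate: "cnext (rotate m xs) a b \<longleftrightarrow> cnext xs a b"
proof (cases "xs = []")
  case True then show ?thesis by simp
next
  case False
  let ?l = "length xs"
  have r: "rotate m xs ! (k mod ?l) = xs ! ((m + k) mod ?l)" for k
    using False by (simp add: nth_rotate mod_add_right_eq)
  show ?thesis
  proof
    assume "cnext (rotate m xs) a b"
    then obtain k where "rotate m xs ! (k mod ?l) = a" "rotate m xs ! (Suc k mod ?l) = b"
      by (auto simp: cnext_alt)
    then show "cnext xs a b" using False r[of k] r[of "Suc k"] unfolding cnext_alt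
      by (metis add_Suc_right)
  next
    assume "cnext xs a b"
    then obtain k where k: "xs ! (k mod ?l) = a" "xs ! (Suc k mod ?l) = b"
      by (auto simp: cnext_alt)
    define k' where "k' = k + (?l - 1) * m"
    have e: "(m + k') mod ?l = k mod ?l"
    proof -
      have "m + k' = k + ?l * m" using False unfolding k'_def
        by (cases ?l) (auto simp: algebra_simps)
      then show ?thesis by simp
    qed
    have e2: "(m + Suc k') mod ?l = Suc k mod ?l"
    proof -
      have "m + Suc k' = Suc k + ?l * m" using False unfolding k'_def
        by (cases ?l) (auto simp: algebra_simps)
      then show ?thesis by simp
    qed
    have "rotate m xs ! (k' mod ?l) = a" using r[of k'] e k by simp
    moreover have "rotate m xs ! (Suc k' mod ?l) = b" using r[of "Suc k'"] e2 k by simp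
    ultimately show "cnext (rotate m xs) a b" using False unfolding cnext_alt by auto
  qed
qed

lemma cnext_revflip: "cnext (revflip xs) a b \<longleftrightarrow> cnext xs (dflip b) (dflip a)"
proof -
  let ?l = "length xs"
  have 1: "cnext xs (dflip b) (dflip a)" if "cnext (revflip xs) a b" for xs a b
  proof -
    let ?l = "length xs"
    from that obtain k where k: "k < ?l" "revflip xs ! k = a" "revflip xs ! (Suc k mod ?l) = b"
      by (auto simp: cnext_def)
    show ?thesis
    proof (cases "Suc k = ?l")
      case True
      have r0: "revflip xs ! 0 = dflip (xs ! (?l - Suc 0))" using nth_revflip[of 0 xs] k(1) by (cases xs) auto
      have "dflip (xs ! 0) = a" using k True by (simp add: nth_revflip)
      then have "xs ! 0 = dflip a" by auto
      moreover have "b = revflip xs ! 0" using k(3) True by simp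
      then have "b = dflip (xs ! (?l - Suc 0))" using r0 by simp
      then have "xs ! (?l - 1) = dflip b" by simp
      moreover have sl: "Suc (?l - 1) = ?l" using k(1) by arith
      moreover have "Suc (?l - 1) mod ?l = 0" "?l - 1 < ?l" using k(1) sl by auto
      ultimately show ?thesis unfolding cnext_def
        by (intro exI[of _ "?l - 1"]) auto
    next
      case False
      then have "Suc k < ?l" using k by simp
      then have "xs ! (?l - Suc k) = dflip a" "xs ! (?l - Suc (Suc k)) = dflip b" using k
        by (auto simp: nth_revflip)
      moreover have "Suc (?l - Suc (Suc k)) = ?l - Suc k" using \<open>Suc k < ?l\<close> by simp
      ultimately show ?thesis unfolding cnext_def using \<open>Suc k < ?l\<close>
        by (intro exI[of _ "?l - Suc (Suc k)"]) auto
    qed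
  qed
  have 2: "cnext (revflip xs) a b" if "cnext xs (dflip b) (dflip a)"
    using 1[of "revflip xs" "dflip b" "dflip a"] that by simp
  show ?thesis using 1[of xs a b] 2 by blast
qed


lemma rev_rotate_ex: "\<exists>m'. rev (rotate m xs) = rotate m' (rev xs)"
proof (cases "xs = []")
  case True then show ?thesis by simp
next
  case False
  let ?l = "length xs"
  show ?thesis
  proof (cases "m mod ?l = 0")
    case True
    then show ?thesis by (intro exI[of _ 0]) simp
  next
    case False
    let ?n = "?l - m mod ?l"
    have "?n < ?l" "?n mod ?l = ?n" using False \<open>xs \<noteq> []\<close> by auto
    moreover have "?l - ?n = m mod ?l" using \<open>xs \<noteq> []\<close>
      by (simp add: diff_diff_cancel less_imp_le)
    ultimately have "rotate ?n (rev xs) = rev (rotate (m mod ?l) xs)"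
      using rotate_rev[of ?n xs] by simp
    then show ?thesis by (metis rotate_conv_mod)
  qed
qed

lemma revflip_rotate_ex: "\<exists>m'. revflip (rotate m xs) = rotate m' (revflip xs)"
proof -
  obtain m' where "rev (rotate m xs) = rotate m' (rev xs)" using rev_rotate_ex by blast
  then show ?thesis unfolding revflip_def by (metis rotate_map)
qed

lemma rotate_inv_ex: "\<exists>m'. xs = rotate m' (rotate m xs)"
proof (cases "xs = []")
  case True then show ?thesis by simp
next
  case False
  let ?l = "length xs"
  have "(?l - m mod ?l + m) mod ?l = 0"
  proof -
    have "m mod ?l < ?l" using False by simp
    have "(?l - m mod ?l + m) mod ?l = (?l - m mod ?l + m mod ?l) mod ?l"
      by (metis mod_add_right_eq)
    also have "\<dots> = ?l mod ?l" using \<open>m mod ?l < ?l\<close> by simp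
    finally show ?thesis by simp
  qed
  then show ?thesis by (intro exI[of _ "?l - m mod ?l"]) (simp add: rotate_rotate)
qed

lemma dc_class_iff: "ys \<in> dc_class xs \<longleftrightarrow> (\<exists>k. ys = rotate k xs \<or> ys = rotate k (revflip xs))"
  by (simp add: dc_class_def revflip_def)

lemma dc_class_self: "xs \<in> dc_class xs"
  unfolding dc_class_iff by (intro exI[of _ 0]) simp

lemma dc_class_rotate: "rotate k xs \<in> dc_class xs"
  unfolding dc_class_iff by blast

lemma dc_class_revflip: "rotate k (revflip xs) \<in> dc_class xs"
  unfolding dc_class_iff by blast

lemma dc_class_trans:
  assumes "ys \<in> dc_class xs" "zs \<in> dc_class ys" shows "zs \<in> dc_class xs"
proof -
  from assms(1) obtain k where k: "ys = rotate k xs \<or> ys = rotate k (revflip xs)"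
    unfolding dc_class_iff by blast
  from assms(2) obtain j where j: "zs = rotate j ys \<or> zs = rotate j (revflip ys)"
    unfolding dc_class_iff by blast
  show ?thesis
  proof (cases "ys = rotate k xs")
    case True
    show ?thesis
    proof (cases "zs = rotate j ys")
      case True
      then show ?thesis using \<open>ys = rotate k xs\<close> by (simp add: rotate_rotate dc_class_rotate)
    next
      case False
      then have "zs = rotate j (revflip ys)" using j by blast
      moreover obtain m where "revflip (rotate k xs) = rotate m (revflip xs)"
        using revflip_rotate_ex by blast
      ultimately show ?thesis using \<open>ys = rotate k xs\<close> by (simp add: rotate_rotate dc_class_revflip)
    qed
  next
    case False
    then have ys: "ys = rotate k (revflip xs)" using k by blast
    show ?thesis
    proof (cases "zs = rotate j ys")
      case True
      then show ?thesis using ys by (simp add: rotate_rotate dc_class_revflip)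
    next
      case False
      then have "zs = rotate j (revflip ys)" using j by blast
      moreover obtain m where "revflip (rotate k (revflip xs)) = rotate m (revflip (revflip xs))"
        using revflip_rotate_ex by blast
      ultimately show ?thesis using ys by (simp add: rotate_rotate dc_class_rotate)
    qed
  qed
qed

lemma dc_class_sym:
  assumes "ys \<in> dc_class xs" shows "xs \<in> dc_class ys"
proof -
  from assms obtain k where k: "ys = rotate k xs \<or> ys = rotate k (revflip xs)"
    unfolding dc_class_iff by blast
  show ?thesis
  proof (cases "ys = rotate k xs")
    case True
    obtain m where "xs = rotate m (rotate k xs)" using rotate_inv_ex by blast
    then show ?thesis using True by (metis dc_class_rotate)
  next
    case False
    then have ys: "ys = rotate k (revflip xs)" using k by blast
    obtain m where m: "revflip xs = rotate m ys" using rotate_inv_ex ys by blast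
    obtain m' where "revflip (rotate m ys) = rotate m' (revflip ys)" using revflip_rotate_ex by blast
    then have "xs = rotate m' (revflip ys)" using m by (metis revflip_revflip)
    then show ?thesis by (simp add: dc_class_revflip)
  qed
qed

lemma dc_class_eq: "ys \<in> dc_class xs \<Longrightarrow> dc_class ys = dc_class xs"
  using dc_class_trans dc_class_sym by blast

lemma dc_class_props:
  assumes "ys \<in> dc_class xs"
  shows "length ys = length xs" "fst ` set ys = fst ` set xs"
    "distinct (map fst ys) = distinct (map fst xs)"
proof -
  from assms obtain k where k: "ys = rotate k xs \<or> ys = rotate k (revflip xs)"
    unfolding dc_class_iff by blast
  then show "length ys = length xs" by auto
  show "fst ` set ys = fst ` set xs" using k by (metis fst_set_revflip set_rotate)
  show "distinct (map fst ys) = distinct (map fst xs)" using k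
    by (metis distinct_revflip distinct_rotate rotate_map)
qed

lemma class_follows:
  "(\<exists>ys\<in>dc_class xs. cnext ys a b) \<longleftrightarrow> cnext xs a b \<or> cnext xs (dflip b) (dflip a)"
proof
  assume "\<exists>ys\<in>dc_class xs. cnext ys a b"
  then obtain ys where ys: "ys \<in> dc_class xs" "cnext ys a b" by blast
  then obtain k where "ys = rotate k xs \<or> ys = rotate k (revflip xs)"
    unfolding dc_class_iff by blast
  note this ys(2)
  then show "cnext xs a b \<or> cnext xs (dflip b) (dflip a)"
    using cnext_rotate cnext_revflip by metis
next
  assume "cnext xs a b \<or> cnext xs (dflip b) (dflip a)"
  then show "\<exists>ys\<in>dc_class xs. cnext ys a b"
    using dc_class_self dc_class_revflip[of 0 xs] cnext_revflip[of xs a b] by auto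
qed


lemma mod_pred_succ: "i < (n::nat) \<Longrightarrow> ((i + n - 1) mod n + 1) mod n = i"
proof -
  assume i: "i < n"
  show ?thesis
  proof (cases "i = 0")
    case True
    have a: "i + n - 1 = n - 1" using True by simp
    have b: "n - 1 < n" using i by linarith
    have c: "n - 1 + 1 = n" using i by linarith
    show ?thesis unfolding a mod_less[OF b] c using True by simp
  next
    case False
    have a: "i + n - 1 = (i - 1) + n" using False by linarith
    have b: "i - 1 < n" "i - 1 + 1 = i" using False i by linarith+
    show ?thesis unfolding a mod_add_self2 mod_less[OF b(1)] b(2) using i by simp
  qed
qed

lemma mod_succ_pred: "i < (n::nat) \<Longrightarrow> ((i + 1) mod n + n - 1) mod n = i"
proof -
  assume i: "i < n"
  show ?thesis
  proof (cases "i + 1 = n")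
    case True
    have a: "(i + 1) mod n = 0" using True by simp
    have b: "0 + n - 1 = i" "i < n" using True by linarith+
    show ?thesis unfolding a b(1) mod_less[OF b(2)] ..
  next
    case False
    have b: "i + 1 < n" using False i by linarith
    have c: "i + 1 + n - 1 = i + n" by linarith
    show ?thesis unfolding mod_less[OF b] c mod_add_self2 mod_less[OF i] ..
  qed
qed

context
  fixes n :: nat and p :: "nat \<Rightarrow> nat" and s :: "nat \<Rightarrow> bool"
  assumes sd: "signed_diagram n p s" and npos: "0 < n"
begin

abbreviation "f \<equiv> succ_corner n p s"

lemma sdp: "i < n \<Longrightarrow> p i < n \<and> p i \<noteq> i \<and> p (p i) = i \<and> s (p i) = s i"
  using sd unfolding signed_diagram_def by blast

lemma f_in: "fst x < n \<Longrightarrow> fst (f x) < n"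
  using sdp npos by (cases x) (auto simp: succ_corner_def Let_def)

lemma f_flip: "fst x < n \<Longrightarrow> f (dflip (f x)) = dflip x"
proof (cases x)
  case (Pair i b)
  assume "fst x < n"
  then have i: "i < n" using Pair by simp
  have pi: "p i < n" "p (p i) = i" "s (p i) = s i" using sdp[OF i] by auto
  let ?k = "(i + n - 1) mod n"
  have k: "?k < n" using npos by simp
  have pk: "p ?k < n" "p (p ?k) = ?k" "s (p ?k) = s ?k" using sdp[OF k] by auto
  have e1: "((p i + 1) mod n + n - 1) mod n = p i" using mod_succ_pred[OF pi(1)] .
  have e2: "(p (p ?k) + 1) mod n = i" using pk(2) mod_pred_succ[OF i] by simp
  show ?thesis
  proof (cases b)
    case True
    then show ?thesis using Pair pi e1
      by (cases "s i") (auto simp: succ_corner_def Let_def dflip_def mod_succ_pred)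
  next
    case False
    then show ?thesis using Pair pk e1 e2 mod_succ_pred[OF pk(1)]
      by (cases "s ?k") (auto simp: succ_corner_def Let_def dflip_def)
  qed
qed

lemma f_inj: "fst x < n \<Longrightarrow> fst y < n \<Longrightarrow> f x = f y \<Longrightarrow> x = y"
  by (metis f_flip dflip_dflip)

lemma funpow_in: "fst x < n \<Longrightarrow> fst ((f ^^ k) x) < n"
  by (induction k) (auto simp: f_in)

lemma funpow_cancel: "fst x < n \<Longrightarrow> (f ^^ a) x = (f ^^ (a + d)) x \<Longrightarrow> x = (f ^^ d) x"
proof (induction a)
  case 0 then show ?case by simp
next
  case (Suc a)
  have "f ((f ^^ a) x) = f ((f ^^ (a + d)) x)" using Suc.prems by simp
  then have "(f ^^ a) x = (f ^^ (a + d)) x"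
    using f_inj funpow_in Suc.prems(1) by blast
  then show ?case using Suc by blast
qed

lemma period_ex: "fst x < n \<Longrightarrow> \<exists>m>0. (f ^^ m) x = x"
proof -
  assume x: "fst x < n"
  let ?D = "{0..<n} \<times> (UNIV :: bool set)"
  have fin: "finite ?D" by simp
  let ?h = "\<lambda>k. (f ^^ k) x"
  have "?h ` {0..card ?D} \<subseteq> ?D" using funpow_in[OF x] by (auto simp: mem_Times_iff) (metis fst_conv)
  moreover have "card {0..card ?D} = card ?D + 1" by simp
  ultimately have "\<not> inj_on ?h {0..card ?D}"
    using card_inj_on_le[OF _ _ fin] by fastforce
  then obtain a b where ab: "a \<le> card ?D" "b \<le> card ?D" "a \<noteq> b" "?h a = ?h b"
    unfolding inj_on_def by auto
  show ?thesis
  proof (cases "a < b")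
    case True
    then have "(f ^^ a) x = (f ^^ (a + (b - a))) x" using ab by simp
    then have "x = (f ^^ (b - a)) x" using funpow_cancel[OF x] by blast
    then show ?thesis using True by (intro exI[of _ "b - a"]) auto
  next
    case False
    then have "(f ^^ b) x = (f ^^ (b + (a - b))) x" using ab by simp
    then have "x = (f ^^ (a - b)) x" using funpow_cancel[OF x] by blast
    then show ?thesis using False ab by (intro exI[of _ "a - b"]) auto
  qed
qed

abbreviation "P x \<equiv> orbit_period n p s x"

lemma period: "fst x < n \<Longrightarrow> 0 < P x \<and> (f ^^ P x) x = x"
  unfolding orbit_period_def using period_ex LeastI_ex[of "\<lambda>m. 0 < m \<and> (f ^^ m) x = x"] by blast

lemma period_min: "0 < m \<Longrightarrow> m < P x \<Longrightarrow> (f ^^ m) x \<noteq> x"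
  unfolding orbit_period_def using not_less_Least by blast

lemma funpow_mod: "fst x < n \<Longrightarrow> (f ^^ (k mod P x)) x = (f ^^ k) x"
proof -
  assume x: "fst x < n"
  have q: "(f ^^ (P x * q)) x = x" for q
  proof (induction q)
    case 0 then show ?case by simp
  next
    case (Suc q)
    have "(f ^^ (P x * Suc q)) x = (f ^^ (P x + P x * q)) x" by simp
    also have "\<dots> = (f ^^ (P x)) ((f ^^ (P x * q)) x)"
      by (simp only: funpow_add comp_apply)
    finally have "(f ^^ (P x * Suc q)) x = (f ^^ (P x)) ((f ^^ (P x * q)) x)" .
    then show ?case using Suc period[OF x] by simp
  qed
  have "(f ^^ k) x = (f ^^ (k mod P x)) ((f ^^ (P x * (k div P x))) x)"
    by (metis funpow_add comp_apply mod_div_mult_eq mult.commute)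
  then show ?thesis using q by simp
qed

lemma length_ol: "length (orbit_list n p s x) = P x"
  by (simp add: orbit_list_def)

lemma nth_ol: "k < P x \<Longrightarrow> orbit_list n p s x ! k = (f ^^ k) x"
  by (simp add: orbit_list_def)

lemma cnext_ol: "fst x < n \<Longrightarrow> cnext (orbit_list n p s x) a b \<longleftrightarrow> (\<exists>k<P x. a = (f ^^ k) x) \<and> b = f a"
proof
  assume x: "fst x < n"
  assume "cnext (orbit_list n p s x) a b"
  then obtain k where k: "k < P x" "orbit_list n p s x ! k = a"
    "orbit_list n p s x ! (Suc k mod P x) = b" unfolding cnext_def length_ol by blast
  have "b = (f ^^ (Suc k mod P x)) x" using k(3) nth_ol[of "Suc k mod P x" x] period[OF x] by simp
  also have "\<dots> = (f ^^ Suc k) x" using funpow_mod[OF x] by simp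
  finally show "(\<exists>k<P x. a = (f ^^ k) x) \<and> b = f a" using k nth_ol by auto
next
  assume x: "fst x < n"
  assume "(\<exists>k<P x. a = (f ^^ k) x) \<and> b = f a"
  then obtain k where k: "k < P x" "a = (f ^^ k) x" "b = f a" by blast
  have "b = (f ^^ Suc k) x" using k by simp
  also have "\<dots> = (f ^^ (Suc k mod P x)) x" using funpow_mod[OF x] by simp
  also have "\<dots> = orbit_list n p s x ! (Suc k mod P x)" using nth_ol[of "Suc k mod P x" x] period[OF x] by simp
  finally have "orbit_list n p s x ! (Suc k mod P x) = b" by simp
  moreover have "orbit_list n p s x ! k = a" using nth_ol[OF k(1)] k(2) by simp
  ultimately show "cnext (orbit_list n p s x) a b" unfolding cnext_def length_ol
    using k(1) by blast
qed


lemma dc_follows_cnext: "dc_follows C a b \<longleftrightarrow> (\<exists>c\<in>C. \<exists>xs\<in>c. cnext xs a b)"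
  unfolding dc_follows_def cnext_def ..

lemma follows_iff: "dc_follows (diagram_vertices n p s) a b \<longleftrightarrow> fst a < n \<and> b = f a"
proof
  assume "dc_follows (diagram_vertices n p s) a b"
  then obtain x ys where x: "fst x < n" "ys \<in> dc_class (orbit_list n p s x)" "cnext ys a b"
    unfolding dc_follows_cnext diagram_vertices_def by blast
  then have "cnext (orbit_list n p s x) a b \<or> cnext (orbit_list n p s x) (dflip b) (dflip a)"
    using class_follows by blast
  then show "fst a < n \<and> b = f a"
  proof
    assume "cnext (orbit_list n p s x) a b"
    then obtain k where "a = (f ^^ k) x" "b = f a" using cnext_ol[OF x(1)] by blast
    then show ?thesis using funpow_in[OF x(1), of k] by simp
  next
    assume "cnext (orbit_list n p s x) (dflip b) (dflip a)"
    then obtain k where k: "dflip b = (f ^^ k) x" "dflip a = f (dflip b)"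
      using cnext_ol[OF x(1)] by blast
    have fb: "fst (dflip b) < n" using k(1) funpow_in[OF x(1)] by simp
    have "f a = f (dflip (f (dflip b)))" using k(2) by (metis dflip_dflip)
    also have "\<dots> = b" using f_flip[OF fb] by simp
    finally have "b = f a" by simp
    moreover have "fst a < n" using f_in[OF fb] k(2) by (metis fst_dflip)
    ultimately show ?thesis by simp
  qed
next
  assume a: "fst a < n \<and> b = f a"
  then have "cnext (orbit_list n p s a) a b" using cnext_ol[of a a b] period[of a]
    by (metis funpow_0)
  moreover have "dc_class (orbit_list n p s a) \<in> diagram_vertices n p s"
    using a unfolding diagram_vertices_def by blast
  ultimately show "dc_follows (diagram_vertices n p s) a b"
    unfolding dc_follows_cnext using dc_class_self by blast
qed

lemma forward:
  assumes deg: "\<forall>x. fst x < n \<longrightarrow> 3 \<le> length (orbit_list n p s x)"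
  defines "C \<equiv> diagram_vertices n p s"
  shows "((\<forall>c\<in>C. \<forall>xs\<in>c. 3 \<le> length xs) \<and>
      (\<not> (\<exists>i<n. dc_follows C (i, True) ((i + 1) mod n, True))) \<and>
      (\<forall>i<n. \<forall>j<n. dc_follows C (i, True) (j, True) \<longrightarrow>
          dc_follows C ((j + n - 1) mod n, True) ((i + 1) mod n, True)) \<and>
      (\<forall>i<n. \<forall>j<n. dc_follows C (i, True) (j, False) \<longrightarrow>
          dc_follows C ((i + 1) mod n, False) ((j + 1) mod n, True)))"
proof (intro conjI)
  show "\<forall>c\<in>C. \<forall>xs\<in>c. 3 \<le> length xs"
    using deg dc_class_props(1) unfolding C_def diagram_vertices_def by fastforce
  show "\<not> (\<exists>i<n. dc_follows C (i, True) ((i + 1) mod n, True))"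
  proof
    assume "\<exists>i<n. dc_follows C (i, True) ((i + 1) mod n, True)"
    then obtain i where i: "i < n" "((i + 1) mod n, True) = f (i, True)"
      unfolding C_def follows_iff by auto
    then have si: "s i" "(p i + 1) mod n = (i + 1) mod n"
      by (auto simp: succ_corner_def Let_def split: if_splits)
    have "p i = ((p i + 1) mod n + n - 1) mod n" using sdp[OF i(1)] mod_succ_pred by simp
    also have "\<dots> = i" using si(2) mod_succ_pred[OF i(1)] by simp
    finally show False using sdp[OF i(1)] by simp
  qed
  show "\<forall>i<n. \<forall>j<n. dc_follows C (i, True) (j, True) \<longrightarrow>
          dc_follows C ((j + n - 1) mod n, True) ((i + 1) mod n, True)"
  proof (intro allI impI)
    fix i j assume i: "i < n" and j: "j < n" and "dc_follows C (i, True) (j, True)"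
    then have "(j, True) = f (i, True)" unfolding C_def follows_iff by auto
    then have si: "s i" "j = (p i + 1) mod n"
      by (auto simp: succ_corner_def Let_def split: if_splits)
    have pi: "p i < n" "p (p i) = i" "s (p i) = s i" using sdp[OF i] by auto
    have jm: "(j + n - 1) mod n = p i" using si(2) mod_succ_pred[OF pi(1)] by simp
    have "f (p i, True) = ((i + 1) mod n, True)" using pi si
      by (simp add: succ_corner_def Let_def)
    then show "dc_follows C ((j + n - 1) mod n, True) ((i + 1) mod n, True)"
      unfolding C_def follows_iff jm using pi by simp
  qed
  show "\<forall>i<n. \<forall>j<n. dc_follows C (i, True) (j, False) \<longrightarrow>
          dc_follows C ((i + 1) mod n, False) ((j + 1) mod n, True)"
  proof (intro allI impI)
    fix i j assume i: "i < n" and j: "j < n" and "dc_follows C (i, True) (j, False)"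
    then have "(j, False) = f (i, True)" unfolding C_def follows_iff by auto
    then have si: "\<not> s i" "j = p i"
      by (auto simp: succ_corner_def Let_def split: if_splits)
    have "f ((i + 1) mod n, False) = ((j + 1) mod n, True)" using si mod_succ_pred[OF i]
      by (simp add: succ_corner_def Let_def)
    then show "dc_follows C ((i + 1) mod n, False) ((j + 1) mod n, True)"
      unfolding C_def follows_iff using npos by simp
  qed
qed

end


definition Fsel :: "dcorner list set set \<Rightarrow> dcorner \<Rightarrow> dcorner" where
  "Fsel C a = (THE b. dc_follows C a b)"

definition ss :: "dcorner list set set \<Rightarrow> nat \<Rightarrow> bool" where
  "ss C i = snd (Fsel C (i, True))"

definition pp :: "nat \<Rightarrow> dcorner list set set \<Rightarrow> nat \<Rightarrow> nat" where
  "pp n C i = (if snd (Fsel C (i, True)) then (fst (Fsel C (i, True)) + n - 1) mod n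
               else fst (Fsel C (i, True)))"

lemma follows_cnext: "dc_follows C a b \<longleftrightarrow> (\<exists>c\<in>C. \<exists>xs\<in>c. cnext xs a b)"
  unfolding dc_follows_def cnext_def ..

lemma cnext_mem: "cnext xs a b \<Longrightarrow> a \<in> set xs \<and> b \<in> set xs"
  unfolding cnext_def by (metis length_greater_0_conv list.size(3) mod_less_divisor not_less0 nth_mem)

lemma dc_corners_class: "dc_corners (dc_class xs) = fst ` set xs"
  unfolding dc_corners_def using dc_class_props(2) dc_class_self by blast

lemma idx_unique: "distinct (map fst xs) \<Longrightarrow> k < length xs \<Longrightarrow> k' < length xs \<Longrightarrow>
   fst (xs ! k) = fst (xs ! k') \<Longrightarrow> k = k'"
  by (metis distinct_conv_nth length_map nth_map)

lemma suc_mod_inj: "k < (l::nat) \<Longrightarrow> k' < l \<Longrightarrow> Suc k mod l = Suc k' mod l \<Longrightarrow> k = k'"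
  by (metis Suc_lessI mod_Suc mod_less nat.inject old.nat.distinct(1) zero_less_Suc)

lemma list_unique:
  fixes xs :: "dcorner list"
  assumes d: "distinct (map fst xs)"
    and 1: "cnext xs a b \<or> cnext xs (dflip b) (dflip a)"
    and 2: "cnext xs a b' \<or> cnext xs (dflip b') (dflip a)"
  shows "b = b'"
proof -
  let ?l = "length xs"
  have sm: "Suc k mod ?l < ?l" if "k < ?l" for k
  proof -
    have "0 < ?l" using that by linarith
    then show ?thesis by (rule mod_less_divisor)
  qed
  have U1: "a1 = a2 \<and> b1 = b2" if h: "cnext xs a1 b1" "cnext xs a2 b2" "fst a1 = fst a2" for a1 b1 a2 b2
  proof -
    obtain k where k: "k < ?l" "xs ! k = a1" "xs ! (Suc k mod ?l) = b1" using h(1) unfolding cnext_def by blast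
    obtain k' where k': "k' < ?l" "xs ! k' = a2" "xs ! (Suc k' mod ?l) = b2" using h(2) unfolding cnext_def by blast
    have "k = k'" using idx_unique[OF d k(1) k'(1)] k k' h(3) by simp
    then show ?thesis using k k' by simp
  qed
  have U2: "a1 = a2 \<and> b1 = b2" if h: "cnext xs a1 b1" "cnext xs a2 b2" "fst b1 = fst b2" for a1 b1 a2 b2
  proof -
    obtain k where k: "k < ?l" "xs ! k = a1" "xs ! (Suc k mod ?l) = b1" using h(1) unfolding cnext_def by blast
    obtain k' where k': "k' < ?l" "xs ! k' = a2" "xs ! (Suc k' mod ?l) = b2" using h(2) unfolding cnext_def by blast
    have "Suc k mod ?l = Suc k' mod ?l" using idx_unique[OF d sm[OF k(1)] sm[OF k'(1)]] k k' h(3) by simp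
    then have "k = k'" using suc_mod_inj k(1) k'(1) by blast
    then show ?thesis using k k' by simp
  qed
  have U3: "a1 = b2" if h: "cnext xs a1 b1" "cnext xs a2 b2" "fst a1 = fst b2" for a1 b1 a2 b2
  proof -
    obtain k where k: "k < ?l" "xs ! k = a1" "xs ! (Suc k mod ?l) = b1" using h(1) unfolding cnext_def by blast
    obtain k' where k': "k' < ?l" "xs ! k' = a2" "xs ! (Suc k' mod ?l) = b2" using h(2) unfolding cnext_def by blast
    have "k = Suc k' mod ?l" using idx_unique[OF d k(1) sm[OF k'(1)]] k k' h(3) by simp
    then show ?thesis using k k' by simp
  qed
  show ?thesis
  proof (cases "cnext xs a b")
    case True
    note ab = True
    show ?thesis
    proof (cases "cnext xs a b'")
      case True
      then show ?thesis using U1[OF \<open>cnext xs a b\<close> True] by simp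
    next
      case False
      then have e: "cnext xs (dflip b') (dflip a)" using 2 by blast
      have "a = dflip a" using U3[OF ab e] by simp
      then show ?thesis by (metis dflip_neq)
    qed
  next
    case False
    then have c1: "cnext xs (dflip b) (dflip a)" using 1 by blast
    show ?thesis
    proof (cases "cnext xs a b'")
      case True
      then have "a = dflip a" using U3[OF True c1] by simp
      then show ?thesis by (metis dflip_neq)
    next
      case False
      then have e: "cnext xs (dflip b') (dflip a)" using 2 by blast
      have "dflip b = dflip b'" using U2[OF c1 e] by simp
      then show ?thesis by (metis dflip_dflip)
    qed
  qed
qed

lemma cnext_fst_mem:
  assumes "cnext xs a b \<or> cnext xs (dflip b) (dflip a)"
  shows "fst a \<in> fst ` set xs \<and> fst b \<in> fst ` set xs"
  using assms
proof (elim disjE)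
  assume "cnext xs a b"
  then have "a \<in> set xs" "b \<in> set xs" using cnext_mem by blast+
  then show ?thesis by (simp add: imageI)
next
  assume "cnext xs (dflip b) (dflip a)"
  then have "dflip a \<in> set xs" "dflip b \<in> set xs" using cnext_mem by blast+
  have "fst (dflip a) \<in> fst ` set xs" using \<open>dflip a \<in> set xs\<close> by (rule imageI)
  moreover have "fst (dflip b) \<in> fst ` set xs" using \<open>dflip b \<in> set xs\<close> by (rule imageI)
  ultimately show ?thesis by simp
qed

context
  fixes n :: nat and C :: "dcorner list set set"
  assumes npos: "0 < n" and coll: "dc_collection n C"
    and c1: "\<forall>c\<in>C. \<forall>xs\<in>c. 3 \<le> length xs"
    and c2: "\<not> (\<exists>i<n. dc_follows C (i, True) ((i + 1) mod n, True))"
    and c3: "\<forall>i<n. \<forall>j<n. dc_follows C (i, True) (j, True) \<longrightarrow>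
          dc_follows C ((j + n - 1) mod n, True) ((i + 1) mod n, True)"
    and c4: "\<forall>i<n. \<forall>j<n. dc_follows C (i, True) (j, False) \<longrightarrow>
          dc_follows C ((i + 1) mod n, False) ((j + 1) mod n, True)"
begin

lemma coll1: "\<forall>c\<in>C. \<exists>xs. c = dc_class xs \<and> distinct (map fst xs) \<and> fst ` set xs \<subseteq> {0..<n}"
  using coll unfolding dc_collection_def by (rule conjunct1)

lemma coll2: "\<forall>i<n. \<exists>!c. c \<in> C \<and> i \<in> dc_corners c"
  using coll unfolding dc_collection_def by (rule conjunct2)

lemma rep: "c \<in> C \<Longrightarrow> \<exists>xs. c = dc_class xs \<and> distinct (map fst xs) \<and> fst ` set xs \<subseteq> {0..<n}"
  using coll1 by (rule bspec)

lemma cover: "i < n \<Longrightarrow> \<exists>c\<in>C. i \<in> dc_corners c"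
proof -
  assume "i < n"
  then have "\<exists>!c. c \<in> C \<and> i \<in> dc_corners c" using coll2 by blast
  then show ?thesis by (metis (mono_tags, lifting) Ex1_def)
qed

lemma cover_unique: "i < n \<Longrightarrow> c \<in> C \<Longrightarrow> c' \<in> C \<Longrightarrow> i \<in> dc_corners c \<Longrightarrow> i \<in> dc_corners c' \<Longrightarrow> c = c'"
proof -
  assume a: "i < n" "c \<in> C" "c' \<in> C" "i \<in> dc_corners c" "i \<in> dc_corners c'"
  have "\<exists>!c. c \<in> C \<and> i \<in> dc_corners c" using coll2 a(1) by blast
  then show "c = c'" using a(2-5) by (metis (mono_tags, lifting) Ex1_def)
qed

lemma follows_char:
  assumes "dc_follows C a b"
  shows "\<exists>c\<in>C. \<exists>xs. c = dc_class xs \<and> distinct (map fst xs) \<and> fst ` set xs \<subseteq> {0..<n} \<and>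
     (cnext xs a b \<or> cnext xs (dflip b) (dflip a))"
proof -
  obtain c ys where c: "c \<in> C" "ys \<in> c" "cnext ys a b" using assms follows_cnext by blast
  obtain xs where xs: "c = dc_class xs" "distinct (map fst xs)" "fst ` set xs \<subseteq> {0..<n}"
    using rep[OF c(1)] by blast
  have "cnext xs a b \<or> cnext xs (dflip b) (dflip a)" using class_follows[of xs a b] c xs by blast
  then show ?thesis using c xs by blast
qed

lemma follows_lt:
  assumes "dc_follows C a b" shows "fst a < n" "fst b < n"
proof -
  obtain c xs where xs: "c \<in> C" "fst ` set xs \<subseteq> {0..<n}" "cnext xs a b \<or> cnext xs (dflip b) (dflip a)"
    using follows_char[OF assms] by blast
  then have "fst a \<in> fst ` set xs \<and> fst b \<in> fst ` set xs"
    using cnext_fst_mem by blast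
  then show "fst a < n" "fst b < n" using xs(2) by auto
qed

lemma follows_unique:
  assumes "dc_follows C a b" "dc_follows C a b'" shows "b = b'"
proof -
  obtain c xs where xs: "c \<in> C" "c = dc_class xs" "distinct (map fst xs)"
    "cnext xs a b \<or> cnext xs (dflip b) (dflip a)"
    using follows_char[OF assms(1)] by blast
  obtain c' xs' where xs': "c' \<in> C" "c' = dc_class xs'" "cnext xs' a b' \<or> cnext xs' (dflip b') (dflip a)"
    using follows_char[OF assms(2)] by blast
  have "fst a \<in> fst ` set xs" using cnext_fst_mem[OF xs(4)] by blast
  moreover have "fst a \<in> fst ` set xs'" using cnext_fst_mem[OF xs'(3)] by blast
  ultimately have "c = c'" using cover_unique[OF follows_lt(1)[OF assms(1)] xs(1) xs'(1)] xs(2) xs'(2)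
    by (simp add: dc_corners_class)
  then have "xs' \<in> dc_class xs" using xs(2) xs'(2) dc_class_self by simp
  moreover have "\<exists>ys\<in>dc_class xs. cnext ys a b'"
  proof (cases "cnext xs' a b'")
    case True then show ?thesis using \<open>xs' \<in> dc_class xs\<close> by blast
  next
    case False
    then have "cnext xs' (dflip b') (dflip a)" using xs'(3) by blast
    then have "cnext (revflip xs') a b'" using cnext_revflip by simp
    moreover have "revflip xs' \<in> dc_class xs"
      using dc_class_revflip[of 0 xs'] dc_class_eq[OF \<open>xs' \<in> dc_class xs\<close>] by simp
    ultimately show ?thesis by blast
  qed
  ultimately have "cnext xs a b' \<or> cnext xs (dflip b') (dflip a)" using class_follows by blast
  then show ?thesis using list_unique[OF xs(3) xs(4)] by blast
qed

lemma follows_flip: "dc_follows C a b \<Longrightarrow> dc_follows C (dflip b) (dflip a)"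
proof -
  assume "dc_follows C a b"
  then obtain c ys where c: "c \<in> C" "ys \<in> c" "cnext ys a b" using follows_cnext by blast
  obtain xs where xs: "c = dc_class xs" using rep[OF c(1)] by blast
  have "revflip ys \<in> c"
    using dc_class_revflip[of 0 ys] dc_class_eq c(2) xs by simp
  moreover have "cnext (revflip ys) (dflip b) (dflip a)" using c(3) cnext_revflip by simp
  ultimately show ?thesis using c(1) follows_cnext by blast
qed


lemma follows_ex: "fst a < n \<Longrightarrow> \<exists>b. dc_follows C a b"
proof -
  assume a: "fst a < n"
  obtain c where c: "c \<in> C" "fst a \<in> dc_corners c" using cover[OF a] by blast
  obtain xs where xs: "c = dc_class xs" "distinct (map fst xs)" using rep[OF c(1)] by blast
  have "fst a \<in> fst ` set xs" using c(2) xs(1) dc_corners_class by simp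
  then obtain k where k: "k < length xs" "fst (xs ! k) = fst a" by (metis in_set_conv_nth imageE)
  let ?l = "length xs"
  have xc: "xs \<in> c" using xs(1) dc_class_self by simp
  show ?thesis
  proof (cases "xs ! k = a")
    case True
    have "cnext xs a (xs ! (Suc k mod ?l))" unfolding cnext_def using k(1) True by blast
    then show ?thesis using c(1) xc unfolding follows_cnext by blast
  next
    case False
    then have ka: "xs ! k = dflip a" using k(2) by (cases a; cases "xs ! k") (auto simp: dflip_def)
    define j where "j = (k + ?l - 1) mod ?l"
    have l0: "0 < ?l" using k(1) by linarith
    have j: "j < ?l" unfolding j_def using l0 by (rule mod_less_divisor)
    have sj: "Suc j mod ?l = k" unfolding j_def using mod_pred_succ[OF k(1)] by simp
    have "cnext xs (xs ! j) (dflip a)" unfolding cnext_def using j sj ka by auto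
    then have "cnext xs (dflip (dflip (xs ! j))) (dflip a)" by simp
    then have "\<exists>ys\<in>dc_class xs. cnext ys a (dflip (xs ! j))" using class_follows by blast
    then show ?thesis using c(1) xs(1) unfolding follows_cnext by blast
  qed
qed

lemma F_follows: "fst a < n \<Longrightarrow> dc_follows C a (Fsel C a)"
  unfolding Fsel_def using follows_ex follows_unique by (metis theI)

lemma F_eq: "dc_follows C a b \<Longrightarrow> Fsel C a = b"
  using F_follows follows_lt follows_unique by blast

lemma noself:
  assumes f: "dc_follows C a b" shows "fst a \<noteq> fst b"
proof
  assume e: "fst a = fst b"
  obtain c ys where c: "c \<in> C" "ys \<in> c" "cnext ys a b" using f unfolding follows_cnext by blast
  obtain xs where xs: "c = dc_class xs" "distinct (map fst xs)" using rep[OF c(1)] by blast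
  have "ys \<in> dc_class xs" using c(2) xs(1) by simp
  then have d: "distinct (map fst ys)" using dc_class_props(3) xs(2) by blast
  have l: "3 \<le> length ys" using c1 c(1) c(2) by blast
  obtain k where k: "k < length ys" "ys ! k = a" "ys ! (Suc k mod length ys) = b"
    using c(3) unfolding cnext_def by blast
  have l0: "0 < length ys" using l by linarith
  have sl: "Suc k mod length ys < length ys" using l0 by (rule mod_less_divisor)
  have "fst (ys ! k) = fst (ys ! (Suc k mod length ys))" using k(2) k(3) e by simp
  then have kk: "k = Suc k mod length ys" using idx_unique[OF d k(1) sl] by blast
  show False
  proof (cases "Suc k < length ys")
    case True
    then have "Suc k mod length ys = Suc k" by (rule mod_less)
    then show False using kk by simp
  next
    case False
    then have "Suc k = length ys" using k(1) by linarith
    then have "Suc k mod length ys = 0" by simp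
    then show False using kk l \<open>Suc k = length ys\<close> by linarith
  qed
qed

abbreviation "pC \<equiv> pp n C"
abbreviation "sC \<equiv> ss C"

lemma F_lt: "fst a < n \<Longrightarrow> fst (Fsel C a) < n"
  using F_follows follows_lt by blast

lemma sd_ok: "signed_diagram n pC sC"
  unfolding signed_diagram_def
proof (intro allI impI)
  fix i assume i: "i < n"
  obtain j t where b: "Fsel C (i, True) = (j, t)" by (cases "Fsel C (i, True)")
  have fi: "dc_follows C (i, True) (j, t)" using F_follows[of "(i, True)"] i b by simp
  have j: "j < n" using follows_lt(2)[OF fi] by simp
  show "pC i < n \<and> pC i \<noteq> i \<and> pC (pC i) = i \<and> sC (pC i) = sC i"
  proof (cases t)
    case True
    have pi: "pC i = (j + n - 1) mod n" "sC i" using b True by (simp_all add: pp_def ss_def)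
    have fiT: "dc_follows C (i, True) (j, True)" using fi True by simp
    have f2: "dc_follows C ((j + n - 1) mod n, True) ((i + 1) mod n, True)"
      using c3 i j fiT by blast
    have Fp: "Fsel C (pC i, True) = ((i + 1) mod n, True)" using F_eq[OF f2] pi by simp
    have "pC (pC i) = ((i + 1) mod n + n - 1) mod n" using Fp by (simp add: pp_def)
    also have "\<dots> = i" using mod_succ_pred[OF i] .
    finally have pp2: "pC (pC i) = i" .
    have sp: "sC (pC i) = sC i" using Fp pi by (simp add: ss_def)
    have ne: "pC i \<noteq> i"
    proof
      assume "pC i = i"
      then have "(j + n - 1) mod n = i" using pi by simp
      then have "j = (i + 1) mod n" using mod_pred_succ[OF j] by simp
      then have "dc_follows C (i, True) ((i + 1) mod n, True)" using fiT by simp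
      then show False using c2 i by blast
    qed
    show ?thesis using pi npos pp2 sp ne by simp
  next
    case False
    have pi: "pC i = j" "\<not> sC i" using b False by (simp_all add: pp_def ss_def)
    have f2: "dc_follows C (j, True) (i, False)" using follows_flip[OF fi] False by (simp add: dflip_def)
    have Fp: "Fsel C (j, True) = (i, False)" using F_eq[OF f2] .
    have ne: "j \<noteq> i" using noself[OF fi] by simp
    show ?thesis using pi Fp j ne by (simp add: pp_def ss_def)
  qed
qed

lemma succ_eq_F: "fst x < n \<Longrightarrow> succ_corner n pC sC x = Fsel C x"
proof (cases x)
  case (Pair i d)
  assume "fst x < n"
  then have i: "i < n" using Pair by simp
  show ?thesis
  proof (cases d)
    case True
    obtain j t where b: "Fsel C (i, True) = (j, t)" by (cases "Fsel C (i, True)")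
    have fi: "dc_follows C (i, True) (j, t)" using F_follows[of "(i, True)"] i b by simp
    have j: "j < n" using follows_lt(2)[OF fi] by simp
    show ?thesis
    proof (cases t)
      case True
      then show ?thesis using b Pair \<open>d\<close> mod_pred_succ[OF j]
        by (simp add: succ_corner_def pp_def ss_def)
    next
      case False
      then show ?thesis using b Pair \<open>d\<close>
        by (simp add: succ_corner_def pp_def ss_def)
    qed
  next
    case False
    let ?k = "(i + n - 1) mod n"
    have k: "?k < n" using npos by simp
    have k1: "(?k + 1) mod n = i" using mod_pred_succ[OF i] .
    obtain m t where b: "Fsel C (?k, True) = (m, t)" by (cases "Fsel C (?k, True)")
    have fk: "dc_follows C (?k, True) (m, t)" using F_follows[of "(?k, True)"] k b by simp
    have m: "m < n" using follows_lt(2)[OF fk] by simp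
    show ?thesis
    proof (cases t)
      case True
      have fkT: "dc_follows C (?k, True) (m, True)" using fk True by simp
      have "dc_follows C ((m + n - 1) mod n, True) ((?k + 1) mod n, True)"
        using c3 k m fkT by blast
      then have "dc_follows C ((m + n - 1) mod n, True) (i, True)" using k1 by simp
      then have "dc_follows C (i, False) ((m + n - 1) mod n, False)"
        using follows_flip[of "((m + n - 1) mod n, True)" "(i, True)"] by (simp add: dflip_def)
      then have "Fsel C (i, False) = ((m + n - 1) mod n, False)" by (rule F_eq)
      then show ?thesis using b Pair \<open>\<not> d\<close> True
        by (simp add: succ_corner_def pp_def ss_def Let_def)
    next
      case False
      have fkF: "dc_follows C (?k, True) (m, False)" using fk False by simp
      have "dc_follows C ((?k + 1) mod n, False) ((m + 1) mod n, True)"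
        using c4 k m fkF by blast
      then have "Fsel C (i, False) = ((m + 1) mod n, True)" using k1 F_eq by simp
      then show ?thesis using b Pair \<open>\<not> d\<close> False
        by (simp add: succ_corner_def pp_def ss_def Let_def)
    qed
  qed
qed


lemma orbit_class:
  assumes x: "fst x < n" and c: "c \<in> C" "fst x \<in> dc_corners c"
  shows "dc_class (orbit_list n pC sC x) = c \<and> 3 \<le> length (orbit_list n pC sC x)"
proof -
  let ?f = "succ_corner n pC sC"
  obtain xs where xs: "c = dc_class xs" "distinct (map fst xs)" "fst ` set xs \<subseteq> {0..<n}"
    using rep[OF c(1)] by blast
  have "fst x \<in> fst ` set xs" using c(2) xs(1) dc_corners_class by simp
  then obtain k where k: "k < length xs" "fst (xs ! k) = fst x" by (metis in_set_conv_nth imageE)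
  let ?l = "length xs"
  have l0: "0 < ?l" using k(1) by linarith
  obtain ys where ys: "ys \<in> dc_class xs" "ys ! 0 = x"
  proof (cases "xs ! k = x")
    case True
    have "rotate k xs ! 0 = xs ! ((k + 0) mod ?l)" using l0 by (rule nth_rotate)
    then have "rotate k xs ! 0 = x" using True k(1) by simp
    then show ?thesis using that dc_class_rotate by blast
  next
    case False
    then have ka: "xs ! k = dflip x" using k(2) by (cases x; cases "xs ! k") (auto simp: dflip_def)
    let ?m = "?l - 1 - k"
    have m: "?m < ?l" using k(1) by linarith
    have "rotate ?m (revflip xs) ! 0 = revflip xs ! ((?m + 0) mod length (revflip xs))"
      using l0 by (intro nth_rotate) simp
    also have "\<dots> = revflip xs ! ?m" using m by simp
    also have "\<dots> = dflip (xs ! (?l - Suc ?m))" using m by (rule nth_revflip)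
    also have "?l - Suc ?m = k" using k(1) by linarith
    finally have "rotate ?m (revflip xs) ! 0 = x" using ka by simp
    then show ?thesis using that dc_class_revflip by blast
  qed
  let ?L = "length ys"
  have ysc: "ys \<in> c" using ys(1) xs(1) by simp
  have L3: "3 \<le> ?L" using c1 c(1) ysc by blast
  have L0: "0 < ?L" using L3 by linarith
  have d: "distinct (map fst ys)" using dc_class_props(3)[OF ys(1)] xs(2) by blast
  have dys: "distinct ys" using d by (simp add: distinct_map)
  have sub: "fst ` set ys \<subseteq> {0..<n}" using dc_class_props(2)[OF ys(1)] xs(3) by simp
  have step: "?f (ys ! j) = ys ! (Suc j mod ?L)" if j: "j < ?L" for j
  proof -
    have "cnext ys (ys ! j) (ys ! (Suc j mod ?L))" unfolding cnext_def using j by blast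
    then have "dc_follows C (ys ! j) (ys ! (Suc j mod ?L))"
      unfolding follows_cnext using c(1) ysc by blast
    then have "Fsel C (ys ! j) = ys ! (Suc j mod ?L)" by (rule F_eq)
    moreover have "fst (ys ! j) < n" using sub j by (meson atLeastLessThan_iff imageI nth_mem subsetD)
    ultimately show ?thesis using succ_eq_F by simp
  qed
  have pow: "(?f ^^ j) x = ys ! j" if "j < ?L" for j
    using that
  proof (induction j)
    case 0 then show ?case using ys(2) by simp
  next
    case (Suc j)
    then have "(?f ^^ Suc j) x = ?f (ys ! j)" by simp
    also have "\<dots> = ys ! (Suc j mod ?L)" using Suc.prems by (intro step) simp
    also have "Suc j mod ?L = Suc j" using Suc.prems by (rule mod_less)
    finally show ?case .
  qed
  have per: "(?f ^^ ?L) x = x"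
  proof -
    have e: "?L = Suc (?L - 1)" using L0 by linarith
    have "(?f ^^ ?L) x = ?f ((?f ^^ (?L - 1)) x)" by (subst e) simp
    also have "\<dots> = ?f (ys ! (?L - 1))" using L0 pow[of "?L - 1"] by simp
    also have "\<dots> = ys ! (Suc (?L - 1) mod ?L)" using L0 by (intro step) simp
    also have "\<dots> = ys ! 0" using e[symmetric] by simp
    finally show ?thesis using ys(2) by simp
  qed
  have mn: "(?f ^^ m) x \<noteq> x" if "0 < m" "m < ?L" for m
  proof
    assume "(?f ^^ m) x = x"
    then have "ys ! m = ys ! 0" using pow[OF that(2)] ys(2) by simp
    then show False using nth_eq_iff_index_eq[OF dys that(2) L0] that(1) by simp
  qed
  have P: "orbit_period n pC sC x = ?L"
    unfolding orbit_period_def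
  proof (rule Least_equality)
    show "0 < ?L \<and> (?f ^^ ?L) x = x" using L0 per by simp
  next
    fix y assume "0 < y \<and> (?f ^^ y) x = x"
    then show "?L \<le> y" using mn by (meson not_le)
  qed
  have OL: "orbit_list n pC sC x = ys"
  proof (rule nth_equalityI)
    show "length (orbit_list n pC sC x) = length ys" by (simp add: orbit_list_def P)
  next
    fix j assume "j < length (orbit_list n pC sC x)"
    then have j: "j < ?L" by (simp add: orbit_list_def P)
    then show "orbit_list n pC sC x ! j = ys ! j" using pow[OF j] by (simp add: orbit_list_def P)
  qed
  have "dc_class ys = c" using dc_class_eq[OF ys(1)] xs(1) by simp
  then show ?thesis using OL L3 by simp
qed

lemma backward: "is_vertex_set n C"
  unfolding is_vertex_set_def
proof (intro exI conjI allI impI)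
  show "signed_diagram n pC sC" by (rule sd_ok)
next
  fix x :: dcorner assume x: "fst x < n"
  obtain c where c: "c \<in> C" "fst x \<in> dc_corners c" using cover[OF x] by blast
  show "3 \<le> length (orbit_list n pC sC x)" using orbit_class[OF x c] by simp
next
  show "C = diagram_vertices n pC sC"
  proof
    show "diagram_vertices n pC sC \<subseteq> C"
    proof
      fix v assume "v \<in> diagram_vertices n pC sC"
      then obtain x where x: "fst x < n" "v = dc_class (orbit_list n pC sC x)"
        unfolding diagram_vertices_def by blast
      obtain c where c: "c \<in> C" "fst x \<in> dc_corners c" using cover[OF x(1)] by blast
      show "v \<in> C" using orbit_class[OF x(1) c] x(2) c(1) by simp
    qed
  next
    show "C \<subseteq> diagram_vertices n pC sC"
    proof
      fix c assume c: "c \<in> C"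
      obtain xs where xs: "c = dc_class xs" "distinct (map fst xs)" "fst ` set xs \<subseteq> {0..<n}"
        using rep[OF c] by blast
      have "3 \<le> length xs" using c1 c xs(1) dc_class_self by blast
      then have "0 < length xs" by linarith
      then have x0: "xs ! 0 \<in> set xs" by (rule nth_mem)
      then have fx: "fst (xs ! 0) \<in> dc_corners c" using xs(1) dc_corners_class by simp
      have lt: "fst (xs ! 0) < n" using xs(3) x0 by auto
      have "dc_class (orbit_list n pC sC (xs ! 0)) = c" using orbit_class[OF lt c fx] by simp
      then show "c \<in> diagram_vertices n pC sC" unfolding diagram_vertices_def using lt by blast
    qed
  qed
qed

end

theorem proposition3p1:
  fixes n e :: nat and C :: "dcorner list set set"
  assumes "n = 2 * e" and "0 < n"
    and "dc_collection n C"
  shows "is_vertex_set n C \<longleftrightarrow>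
     ((\<forall>c\<in>C. \<forall>xs\<in>c. 3 \<le> length xs) \<and>
      (\<not> (\<exists>i<n. dc_follows C (i, True) ((i + 1) mod n, True))) \<and>
      (\<forall>i<n. \<forall>j<n. dc_follows C (i, True) (j, True) \<longrightarrow>
          dc_follows C ((j + n - 1) mod n, True) ((i + 1) mod n, True)) \<and>
      (\<forall>i<n. \<forall>j<n. dc_follows C (i, True) (j, False) \<longrightarrow>
          dc_follows C ((i + 1) mod n, False) ((j + 1) mod n, True)))"
proof
  assume "is_vertex_set n C"
  then obtain p s where sd: "signed_diagram n p s"
    and deg: "\<forall>x. fst x < n \<longrightarrow> 3 \<le> length (orbit_list n p s x)"
    and C: "C = diagram_vertices n p s"
    unfolding is_vertex_set_def by blast
  show "(\<forall>c\<in>C. \<forall>xs\<in>c. 3 \<le> length xs) \<and>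
      (\<not> (\<exists>i<n. dc_follows C (i, True) ((i + 1) mod n, True))) \<and>
      (\<forall>i<n. \<forall>j<n. dc_follows C (i, True) (j, True) \<longrightarrow>
          dc_follows C ((j + n - 1) mod n, True) ((i + 1) mod n, True)) \<and>
      (\<forall>i<n. \<forall>j<n. dc_follows C (i, True) (j, False) \<longrightarrow>
          dc_follows C ((i + 1) mod n, False) ((j + 1) mod n, True))"
    using forward[OF sd assms(2) deg] C by simp
next
  assume h: "(\<forall>c\<in>C. \<forall>xs\<in>c. 3 \<le> length xs) \<and>
      (\<not> (\<exists>i<n. dc_follows C (i, True) ((i + 1) mod n, True))) \<and>
      (\<forall>i<n. \<forall>j<n. dc_follows C (i, True) (j, True) \<longrightarrow>
          dc_follows C ((j + n - 1) mod n, True) ((i + 1) mod n, True)) \<and>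
      (\<forall>i<n. \<forall>j<n. dc_follows C (i, True) (j, False) \<longrightarrow>
          dc_follows C ((i + 1) mod n, False) ((j + 1) mod n, True))"
  show "is_vertex_set n C"
    using backward[OF assms(2) assms(3)] h by blast
qed

end
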